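(* Let $\mathsf{A}\subset GL_2(\mathbb{R})$ with $\mathscr{R}(\mathsf{A})\neq\emptyset$ be such that $\mathcal{S}(\mathsf{A})$ is almost multiplicative. Let $X_u=\{A\mathbb{R}^2 : A\in\mathscr{R}(\mathsf{A})\}$ and $X_s=\{\ker A : A\in\mathscr{R}(\mathsf{A})\}$. Then $X_u=\overline{\{u(A): A\in\mathcal{S}(\mathsf{A})\text{ is proximal}\}}$ and $X_s=\overline{\{s(A): A\in\mathcal{S}(\mathsf{A})\text{ is proximal}\}}$.
   Context: $\|\cdot\|$ is the operator norm; closures are in the real projective line $\mathbb{RP}^1$. $\mathcal{S}(\mathsf{A})$ is the semigroup of finite products of elements of $\mathsf{A}$; $\mathscr{S}(\mathsf{A})=\overline{\mathbb{R}\mathcal{S}(\mathsf{A})}\subset M_2(\mathbb{R})$; $\mathscr{R}(\mathsf{A})=\{A\in\mathscr{S}(\mathsf{A}):\operatorname{rank}(A)=1\}$. A semigroup $\mathcal{S}$ is almost multiplicative if there is $\kappa>0$ with $\|AB\|\ge\kappa\|A\|\|B\|$ for all $A,B\in\mathcal{S}$. A matrix is proximal if it has two real eigenvalues with distinct absolute values; $u(A)$ and $s(A)$ are the eigenspaces of the eigenvalues of larger and smaller absolute value. *)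

theory Defs
  imports "HOL-Analysis.Analysis"
begin

type_synonym mat2 = "real^2^2"

text \<open>Operator norm of a 2x2 real matrix (w.r.t. the Euclidean norm on real^2).\<close>
definition opnorm :: "mat2 \<Rightarrow> real" where
  "opnorm M = onorm (\<lambda>x. M *v x)"

text \<open>The semigroup of finite (nonempty) products of elements of a set.\<close>
inductive_set semigroup_gen :: "mat2 set \<Rightarrow> mat2 set" for S :: "mat2 set" where
  base: "M \<in> S \<Longrightarrow> M \<in> semigroup_gen S"
| step: "M \<in> semigroup_gen S \<Longrightarrow> N \<in> S \<Longrightarrow> M ** N \<in> semigroup_gen S"

text \<open>closure of R * S(A) in M_2(R)\<close>
definition scrS :: "mat2 set \<Rightarrow> mat2 set" where
  "scrS S = closure {c *\<^sub>R M | c M. M \<in> semigroup_gen S}"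

definition scrR :: "mat2 set \<Rightarrow> mat2 set" where
  "scrR S = {M \<in> scrS S. rank M = 1}"

definition almost_multiplicative :: "mat2 set \<Rightarrow> bool" where
  "almost_multiplicative T \<longleftrightarrow>
     (\<exists>\<kappa>>0. \<forall>A\<in>T. \<forall>B\<in>T. opnorm (A ** B) \<ge> \<kappa> * opnorm A * opnorm B)"

definition is_real_eig :: "mat2 \<Rightarrow> real \<Rightarrow> bool" where
  "is_real_eig M l \<longleftrightarrow> (\<exists>v. v \<noteq> 0 \<and> M *v v = l *\<^sub>R v)"

definition proximal :: "mat2 \<Rightarrow> bool" where
  "proximal M \<longleftrightarrow> (\<exists>l1 l2. is_real_eig M l1 \<and> is_real_eig M l2 \<and> \<bar>l1\<bar> \<noteq> \<bar>l2\<bar>)"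

definition eig_large :: "mat2 \<Rightarrow> real" where
  "eig_large M = (THE l. is_real_eig M l \<and> (\<exists>m. is_real_eig M m \<and> \<bar>m\<bar> < \<bar>l\<bar>))"

definition eig_small :: "mat2 \<Rightarrow> real" where
  "eig_small M = (THE l. is_real_eig M l \<and> (\<exists>m. is_real_eig M m \<and> \<bar>l\<bar> < \<bar>m\<bar>))"

text \<open>u(A), s(A): eigenspaces of the eigenvalues of larger / smaller absolute value.\<close>
definition u_space :: "mat2 \<Rightarrow> (real^2) set" where
  "u_space M = {v. M *v v = eig_large M *\<^sub>R v}"

definition s_space :: "mat2 \<Rightarrow> (real^2) set" where
  "s_space M = {v. M *v v = eig_small M *\<^sub>R v}"

text \<open>RP^1 = lines through 0 in real^2; topologised via the embedding
  L = span{v}, |v| = 1  \<mapsto>  v v^T (orthogonal projection onto L).\<close>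
definition is_line :: "(real^2) set \<Rightarrow> bool" where
  "is_line L \<longleftrightarrow> subspace L \<and> dim L = 1"

definition line_proj :: "(real^2) set \<Rightarrow> mat2" where
  "line_proj L = (let v = (SOME v. v \<in> L \<and> norm v = 1) in \<chi> i j. v$i * v$j)"

definition rp1_closure :: "(real^2) set set \<Rightarrow> (real^2) set set" where
  "rp1_closure X = {L. is_line L \<and> line_proj L \<in> closure (line_proj ` X)}"

end

theory Submission
  imports Defs
begin


definition pl :: "real^2 \<Rightarrow> mat2" where
  "pl v = (\<chi> i j. v$i * v$j / (norm v)^2)"

lemma line_proj_span:
  fixes v :: "real^2"
  assumes "v \<noteq> 0"
  shows "line_proj (span {v}) = pl v"
proof -
  define w where "w = (SOME w. w \<in> span {v} \<and> norm w = 1)"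
  have ex: "\<exists>w. w \<in> span {v} \<and> norm w = 1"
    by (rule exI[of _ "(1/norm v) *\<^sub>R v"]) (use assms in \<open>auto simp: span_base span_scale\<close>)
  have w: "w \<in> span {v} \<and> norm w = 1" unfolding w_def by (rule someI_ex[OF ex])
  then obtain k where k: "w = k *\<^sub>R v" by (auto simp: span_singleton)
  with w have "\<bar>k\<bar> * norm v = 1" by simp
  hence "(\<bar>k\<bar> * norm v)^2 = 1" by simp
  hence k2: "k^2 = 1 / (norm v)^2" using assms
    by (simp add: power_mult_distrib field_simps)
  hence kk: "k*k = 1/(norm v * norm v)" by (simp add: power2_eq_square)
  have *: "k * v $ i * k * v $ j = v $ i * v $ j / (norm v)\<^sup>2" for i j
  proof -
    have "k * v $ i * k * v $ j = (k*k) * (v $ i * v $ j)" by simp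
    also have "\<dots> = v $ i * v $ j / (norm v)\<^sup>2" using kk by (simp add: power2_eq_square)
    finally show ?thesis .
  qed
  show ?thesis
    unfolding line_proj_def pl_def Let_def w_def[symmetric]
    using kk by (simp add: vec_eq_iff k mult.assoc[symmetric] *)
qed

lemma is_line_span:
  fixes v :: "real^2"
  assumes "v \<noteq> 0" shows "is_line (span {v})"
  using assms unfolding is_line_def by (simp add: dim_span)

lemma line_rep:
  assumes "is_line (L :: (real^2) set)"
  shows "\<exists>v. v \<noteq> 0 \<and> L = span {v}"
proof -
  from assms have sub: "subspace L" and d: "dim L = 1" by (auto simp: is_line_def)
  obtain B where B: "B \<subseteq> L" "independent B" "L \<subseteq> span B" "card B = dim L"
    using basis_exists by blast
  then obtain v where "B = {v}" using d by (auto simp: card_Suc_eq)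
  moreover have "span B \<subseteq> L" using B(1) sub by (simp add: span_minimal)
  moreover have "v \<noteq> 0" using B(2) \<open>B = {v}\<close> by (auto dest: dependent_zero)
  ultimately show ?thesis using B(3) by (intro exI[of _ v]) auto
qed

lemma pl_apply: "pl v *v x = ((v \<bullet> x) / (norm v)^2) *\<^sub>R v"
  by (simp add: pl_def vec_eq_iff matrix_vector_mult_def inner_vec_def sum_2 add_divide_distrib algebra_simps)

lemma pl_self: "v \<noteq> 0 \<Longrightarrow> pl v *v v = v"
  by (simp add: pl_apply dot_square_norm)

lemma pl_inj:
  fixes v w :: "real^2"
  assumes "v \<noteq> 0" "w \<noteq> 0" "pl v = pl w"
  shows "span {v} = span {w}"
proof -
  have "v = pl w *v v" using assms pl_self by metis
  hence "v \<in> span {w}" by (metis pl_apply span_base span_scale singletonI)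
  then obtain k where k: "v = k *\<^sub>R w" by (auto simp: span_singleton)
  with assms have "k \<noteq> 0" by auto
  show ?thesis
  proof
    show "span {v} \<subseteq> span {w}" using \<open>v \<in> span {w}\<close> by (simp add: span_minimal)
    have "w = (1/k) *\<^sub>R v" using k \<open>k \<noteq> 0\<close> by simp
    hence "w \<in> span {v}" by (metis span_base span_scale singletonI)
    thus "span {w} \<subseteq> span {v}" by (simp add: span_minimal)
  qed
qed



definition tr2 :: "mat2 \<Rightarrow> real" where "tr2 M = M$1$1 + M$2$2"

lemma smv[simp]: "((c::real) *\<^sub>R (M::mat2)) *v v = c *\<^sub>R (M *v v)"
  by (simp add: vec_eq_iff matrix_vector_mult_def sum_2 algebra_simps)

lemma CH: "M ** M = tr2 M *\<^sub>R M - det M *\<^sub>R mat 1"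
  by (simp add: vec_eq_iff forall_2 matrix_matrix_mult_def sum_2 tr2_def det_2 mat_def algebra_simps)

lemma det_shift: "det (M - l *\<^sub>R mat 1) = l^2 - tr2 M * l + det M"
  by (simp add: det_2 tr2_def mat_def power2_eq_square algebra_simps)

lemma det0_ker: "det (Q::mat2) = 0 \<Longrightarrow> \<exists>v. v \<noteq> 0 \<and> Q *v v = 0"
  using matrix_nonfull_linear_equations_eq[of Q] det_eq_0_rank[of Q] by auto

lemma eig_char: "is_real_eig M l \<longleftrightarrow> l^2 - tr2 M * l + det M = 0"
proof
  assume "is_real_eig M l"
  then obtain v where v: "v \<noteq> 0" "M *v v = l *\<^sub>R v" by (auto simp: is_real_eig_def)
  have "(M ** M) *v v = (l^2) *\<^sub>R v"
    by (simp add: matrix_vector_mul_assoc[symmetric] v matrix_vector_mult_scaleR power2_eq_square)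
  also have "(M ** M) *v v = (tr2 M * l - det M) *\<^sub>R v"
    by (simp add: CH matrix_vector_mult_diff_rdistrib v scaleR_diff_left)
  finally have "(l^2 - tr2 M * l + det M) *\<^sub>R v = 0" by (simp add: algebra_simps)
  thus "l^2 - tr2 M * l + det M = 0" using v by simp
next
  assume "l^2 - tr2 M * l + det M = 0"
  then obtain v where v: "v \<noteq> 0" "(M - l *\<^sub>R mat 1) *v v = 0" using det0_ker det_shift by metis
  thus "is_real_eig M l" unfolding is_real_eig_def
    by (intro exI[of _ v]) (simp add: matrix_vector_mult_diff_rdistrib)
qed

lemma rank1_iff: "rank (M::mat2) = 1 \<longleftrightarrow> M \<noteq> 0 \<and> det M = 0"
  using rank_eq_0[of M] det_eq_0_rank[of M] rank_bound[of M] by auto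

lemma col_nz: "(M::mat2) \<noteq> 0 \<Longrightarrow> \<exists>j. column j M \<noteq> 0"
  by (auto simp: column_def vec_eq_iff)

lemma range_rank1:
  fixes M :: mat2
  assumes "M \<noteq> 0" "det M = 0" "column j M \<noteq> 0"
  shows "range ((*v) M) = span {column j M}"
proof -
  have sub: "subspace (range ((*v) M))"
    by (simp add: subspace_UNIV linear_subspace_image)
  have c: "column j M \<in> range ((*v) M)"
    by (metis matrix_vector_mult_basis rangeI)
  have "rank M = 1" using assms rank1_iff by auto
  hence "dim (range ((*v) M)) = 1" by (simp add: rank_dim_range)
  hence "span {column j M} = span (range ((*v) M))"
    using c assms(3) by (intro dim_eq_span) auto
  thus ?thesis using sub span_eq_iff by metis
qed



lemma pl_tendsto:
  assumes "(f \<longlongrightarrow> v) F" "v \<noteq> 0"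
  shows "((\<lambda>x. pl (f x)) \<longlongrightarrow> pl v) F"
  unfolding pl_def using assms
  by (intro tendsto_vec_lambda tendsto_divide tendsto_mult tendsto_vec_nth tendsto_power tendsto_norm) auto

lemma column_tendsto:
  assumes "(Q \<longlongrightarrow> Q0) F"
  shows "((\<lambda>x. column j (Q x)) \<longlongrightarrow> column j Q0) F"
  unfolding column_def using assms by (intro tendsto_vec_lambda tendsto_vec_nth)

lemma rank1_range_props:
  fixes Q :: mat2
  assumes "Q \<noteq> 0" "det Q = 0"
  shows "is_line (range ((*v) Q))"
proof -
  obtain j where "column j Q \<noteq> 0" using col_nz assms by blast
  thus ?thesis using range_rank1[OF assms] is_line_span by simp
qed

lemma lp_range_tendsto:
  fixes Q :: "'a \<Rightarrow> mat2"
  assumes "(Q \<longlongrightarrow> Q0) F" "Q0 \<noteq> 0" "det Q0 = 0" "eventually (\<lambda>x. det (Q x) = 0) F"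
  shows "((\<lambda>x. line_proj (range ((*v) (Q x)))) \<longlongrightarrow> line_proj (range ((*v) Q0))) F"
proof -
  obtain j where j: "column j Q0 \<noteq> 0" using col_nz assms by blast
  have ct: "((\<lambda>x. column j (Q x)) \<longlongrightarrow> column j Q0) F" by (rule column_tendsto[OF assms(1)])
  have ev: "eventually (\<lambda>x. column j (Q x) \<noteq> 0) F"
    by (rule tendsto_imp_eventually_ne[OF ct j])
  have "eventually (\<lambda>x. pl (column j (Q x)) = line_proj (range ((*v) (Q x)))) F"
    using ev assms(4)
  proof eventually_elim
    case (elim x)
    hence "Q x \<noteq> 0" by (auto simp: column_def vec_eq_iff)
    thus ?case using elim range_rank1 line_proj_span by simp
  qed
  note ev2 = this
  have A: "((\<lambda>x. pl (column j (Q x))) \<longlongrightarrow> pl (column j Q0)) F"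
    by (rule pl_tendsto[OF ct j])
  have eq: "pl (column j Q0) = line_proj (range ((*v) Q0))"
    using range_rank1[OF assms(2,3) j] line_proj_span j by simp
  show ?thesis using tendsto_cong[OF ev2, of "line_proj (range ((*v) Q0))"] A eq by simp
qed



lemma sg_mult:
  assumes "N \<in> semigroup_gen A" "M \<in> semigroup_gen A"
  shows "M ** N \<in> semigroup_gen A"
  using assms(1)
proof induction
  case (base N) thus ?case by (rule semigroup_gen.step[OF assms(2)])
next
  case (step N a)
  thus ?case by (metis matrix_mul_assoc semigroup_gen.step)
qed

definition TT :: "mat2 set \<Rightarrow> mat2 set" where
  "TT A = {c *\<^sub>R M | c M. M \<in> semigroup_gen A}"

lemma scrS_TT: "scrS A = closure (TT A)" by (simp add: scrS_def TT_def)

lemma closed_scrS: "closed (scrS A)" by (simp add: scrS_def)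

lemma TT_scrS: "M \<in> TT A \<Longrightarrow> M \<in> scrS A"
  by (simp add: scrS_TT closure_subset[THEN subsetD])

lemma sg_scrS: "M \<in> semigroup_gen A \<Longrightarrow> M \<in> scrS A"
proof (rule TT_scrS)
  assume "M \<in> semigroup_gen A"
  moreover have "M = 1 *\<^sub>R M" by simp
  ultimately show "M \<in> TT A" unfolding TT_def by blast
qed

lemma scrS_scale:
  assumes "R \<in> scrS A" shows "c *\<^sub>R R \<in> scrS A"
proof -
  obtain f where f: "\<And>n. f n \<in> TT A" "f \<longlonglongrightarrow> R"
    using assms unfolding scrS_TT closure_sequential by blast
  have "c *\<^sub>R f n \<in> TT A" for n
  proof -
    obtain c' M where "f n = c' *\<^sub>R M" "M \<in> semigroup_gen A" using f(1)[of n] by (auto simp: TT_def)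
    moreover have "c *\<^sub>R (c' *\<^sub>R M) = (c * c') *\<^sub>R M" by simp
    ultimately show ?thesis unfolding TT_def by force
  qed
  moreover have "(\<lambda>n. c *\<^sub>R f n) \<longlonglongrightarrow> c *\<^sub>R R" using f(2) by (intro tendsto_intros)
  ultimately show ?thesis unfolding scrS_TT closure_sequential by (intro exI[of _ "\<lambda>n. c *\<^sub>R f n"]) auto
qed

lemma opnorm_scale: "opnorm (c *\<^sub>R M) = \<bar>c\<bar> * opnorm M"
  unfolding opnorm_def smv
  by (rule onorm_scaleR) (rule matrix_vector_mul_bounded_linear)

lemma opnorm_ge: "norm (M *v x) \<le> opnorm M * norm x"
  unfolding opnorm_def by (rule onorm) (rule matrix_vector_mul_bounded_linear)

lemma opnorm_le: "opnorm M \<le> (\<Sum>i\<in>UNIV. \<Sum>j\<in>UNIV. \<bar>M $ i $ j\<bar>)"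
  unfolding opnorm_def by (rule onorm_le_matrix_component_sum)

lemma TT_am:
  assumes am: "\<forall>A\<in>semigroup_gen S. \<forall>B\<in>semigroup_gen S. opnorm (A ** B) \<ge> \<kappa> * opnorm A * opnorm B"
    and k: "\<kappa> > 0" and N: "N \<in> TT S"
  shows "opnorm (N ** N) \<ge> \<kappa> * (opnorm N)^2"
proof -
  obtain c M where N: "N = c *\<^sub>R M" and M: "M \<in> semigroup_gen S" using N by (auto simp: TT_def)
  have NN: "N ** N = (c*c) *\<^sub>R (M ** M)" unfolding N
    by (simp add: vec_eq_iff matrix_matrix_mult_def sum_2 algebra_simps)
  have "\<kappa> * (opnorm N)^2 = (c*c) * (\<kappa> * opnorm M * opnorm M)"
    by (simp add: N opnorm_scale power2_eq_square abs_mult_self_eq algebra_simps)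
  also have "\<dots> \<le> (c*c) * opnorm (M ** M)"
    using am M by (intro mult_left_mono) auto
  also have "\<dots> = opnorm (N ** N)" by (simp add: NN opnorm_scale abs_mult_self_eq)
  finally show ?thesis .
qed

lemma mm_tendsto:
  fixes f :: "nat \<Rightarrow> mat2"
  assumes "f \<longlonglongrightarrow> R"
  shows "(\<lambda>n. f n ** f n) \<longlonglongrightarrow> R ** R"
  unfolding matrix_matrix_mult_def using assms
  by (intro tendsto_vec_lambda tendsto_sum tendsto_mult tendsto_vec_nth)

lemma mv_tendsto:
  fixes f :: "nat \<Rightarrow> mat2"
  assumes "f \<longlonglongrightarrow> R"
  shows "(\<lambda>n. f n *v x) \<longlonglongrightarrow> R *v x"
  unfolding matrix_vector_mult_def using assms
  by (intro tendsto_vec_lambda tendsto_sum tendsto_mult tendsto_vec_nth tendsto_const)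

lemma sq_nonzero:
  assumes am: "almost_multiplicative (semigroup_gen S)"
    and R: "R \<in> scrS S" "R \<noteq> 0"
  shows "R ** R \<noteq> 0"
proof
  assume RR: "R ** R = 0"
  obtain \<kappa> where k: "\<kappa> > 0" and amk: "\<forall>A\<in>semigroup_gen S. \<forall>B\<in>semigroup_gen S. opnorm (A ** B) \<ge> \<kappa> * opnorm A * opnorm B"
    using am unfolding almost_multiplicative_def by blast
  obtain f where f: "\<And>n. f n \<in> TT S" "f \<longlonglongrightarrow> R"
    using R unfolding scrS_TT closure_sequential by blast
  obtain j where j: "column j R \<noteq> 0" using col_nz R by blast
  define x :: "real^2" where "x = axis j 1"
  have Rx: "R *v x = column j R" by (simp add: x_def matrix_vector_mult_basis)
  have nx: "norm x = 1" by (simp add: x_def)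
  have ineq: "\<kappa> * (norm (f n *v x))^2 \<le> (\<Sum>i\<in>UNIV. \<Sum>j\<in>UNIV. \<bar>(f n ** f n) $ i $ j\<bar>)" for n
  proof -
    have "norm (f n *v x) \<le> opnorm (f n)" using opnorm_ge[of "f n" x] nx by simp
    hence "(norm (f n *v x))^2 \<le> (opnorm (f n))^2" by (simp add: power_mono)
    hence "\<kappa> * (norm (f n *v x))^2 \<le> \<kappa> * (opnorm (f n))^2" using k by simp
    also have "\<dots> \<le> opnorm (f n ** f n)" by (rule TT_am[OF amk k f(1)])
    also have "\<dots> \<le> (\<Sum>i\<in>UNIV. \<Sum>j\<in>UNIV. \<bar>(f n ** f n) $ i $ j\<bar>)" by (rule opnorm_le)
    finally show ?thesis .
  qed
  have l1: "(\<lambda>n. \<kappa> * (norm (f n *v x))^2) \<longlonglongrightarrow> \<kappa> * (norm (R *v x))^2"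
    by (intro tendsto_intros mv_tendsto f(2))
  have l2: "(\<lambda>n. (\<Sum>i\<in>UNIV. \<Sum>j\<in>UNIV. \<bar>(f n ** f n) $ i $ j\<bar>)) \<longlonglongrightarrow> (\<Sum>i\<in>UNIV. \<Sum>j\<in>UNIV. \<bar>(R ** R) $ i $ j\<bar>)"
    by (intro tendsto_sum tendsto_rabs tendsto_vec_nth mm_tendsto f(2))
  have "\<kappa> * (norm (R *v x))^2 \<le> (\<Sum>i\<in>UNIV. \<Sum>j\<in>UNIV. \<bar>(R ** R) $ i $ j\<bar>)"
    using l1 l2 ineq by (intro LIMSEQ_le) auto
  also have "\<dots> = 0" using RR by simp
  finally have "\<kappa> * (norm (R *v x))^2 \<le> 0" .
  moreover have "\<kappa> * (norm (R *v x))^2 > 0" using k j Rx by simp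
  ultimately show False by simp
qed



lemma range_scale: "k \<noteq> 0 \<Longrightarrow> range ((*v) (k *\<^sub>R (Q::mat2))) = range ((*v) Q)"
proof -
  assume k: "k \<noteq> 0"
  have "Q *v x = (k *\<^sub>R Q) *v ((1/k) *\<^sub>R x)" for x
    using k by (simp add: matrix_vector_mult_scaleR)
  moreover have "(k *\<^sub>R Q) *v x = Q *v (k *\<^sub>R x)" for x
    by (simp add: matrix_vector_mult_scaleR)
  ultimately show ?thesis by (metis (no_types, lifting) image_cong range_eqI subset_antisym image_subsetI rangeI)
qed

lemma mv_shift: "((M::mat2) - l *\<^sub>R mat 1) *v x = M *v x - l *\<^sub>R x"
  by (simp add: matrix_vector_mult_diff_rdistrib)

lemma eig_pair:
  assumes "is_real_eig M a" "is_real_eig M b" "a \<noteq> b"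
  shows "tr2 M = a + b" "det M = a * b"
proof -
  have ea: "a^2 - tr2 M * a + det M = 0" and eb: "b^2 - tr2 M * b + det M = 0"
    using assms eig_char by auto
  hence "(a - b) * (a + b - tr2 M) = 0" by (simp add: power2_eq_square algebra_simps)
  thus t: "tr2 M = a + b" using assms(3) by simp
  show "det M = a * b" using ea t by (simp add: power2_eq_square algebra_simps)
qed

lemma zero_prod:
  assumes "tr2 M = a + b" "det M = a * b"
  shows "(M - a *\<^sub>R mat 1) ** (M - b *\<^sub>R mat 1) = 0"
  using assms unfolding tr2_def det_2
  by (simp add: vec_eq_iff forall_2 matrix_matrix_mult_def sum_2 mat_def) algebra

lemma spec:
  assumes "is_real_eig M a" "is_real_eig M b" "\<bar>a\<bar> > \<bar>b\<bar>"
  shows "proximal M" "eig_large M = a" "eig_small M = b"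
    "u_space M = range ((*v) (M - b *\<^sub>R mat 1))"
    "s_space M = range ((*v) (M - a *\<^sub>R mat 1))"
    "u_space M = {x. M *v x = a *\<^sub>R x}"
    "s_space M = {x. M *v x = b *\<^sub>R x}"
proof -
  have ab: "a \<noteq> b" using assms(3) by auto
  have tr: "tr2 M = a + b" and dt: "det M = a * b" using eig_pair[OF assms(1,2) ab] by auto
  have only: "l = a \<or> l = b" if "is_real_eig M l" for l
  proof -
    have "l^2 - tr2 M * l + det M = 0" using that eig_char by auto
    hence "(l - a) * (l - b) = 0" using tr dt by (simp add: power2_eq_square algebra_simps)
    thus ?thesis by simp
  qed
  show "proximal M" using assms unfolding proximal_def by (intro exI[of _ a] exI[of _ b]) auto
  show la: "eig_large M = a" unfolding eig_large_def
  proof (rule the_equality)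
    show "is_real_eig M a \<and> (\<exists>m. is_real_eig M m \<and> \<bar>m\<bar> < \<bar>a\<bar>)" using assms by auto
  next
    fix l assume "is_real_eig M l \<and> (\<exists>m. is_real_eig M m \<and> \<bar>m\<bar> < \<bar>l\<bar>)"
    then obtain m where "is_real_eig M l" "is_real_eig M m" "\<bar>m\<bar> < \<bar>l\<bar>" by auto
    thus "l = a" using only assms(3) by (metis less_asym)
  qed
  show lb: "eig_small M = b" unfolding eig_small_def
  proof (rule the_equality)
    show "is_real_eig M b \<and> (\<exists>m. is_real_eig M m \<and> \<bar>b\<bar> < \<bar>m\<bar>)" using assms by auto
  next
    fix l assume "is_real_eig M l \<and> (\<exists>m. is_real_eig M m \<and> \<bar>l\<bar> < \<bar>m\<bar>)"
    then obtain m where "is_real_eig M l" "is_real_eig M m" "\<bar>l\<bar> < \<bar>m\<bar>" by auto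
    thus "l = b" using only assms(3) by (metis less_asym)
  qed
  show u: "u_space M = {x. M *v x = a *\<^sub>R x}" unfolding u_space_def la ..
  show s: "s_space M = {x. M *v x = b *\<^sub>R x}" unfolding s_space_def lb ..
  have Z1: "(M - a *\<^sub>R mat 1) ** (M - b *\<^sub>R mat 1) = 0" using zero_prod tr dt by blast
  have Z2: "(M - b *\<^sub>R mat 1) ** (M - a *\<^sub>R mat 1) = 0" using zero_prod[of M b a] tr dt
    by (simp add: algebra_simps)
  have gen: "range ((*v) (M - q *\<^sub>R mat 1)) = {x. M *v x = p *\<^sub>R x}"
    if Z: "(M - p *\<^sub>R mat 1) ** (M - q *\<^sub>R mat 1) = 0" and pq: "p \<noteq> q" for p q
  proof
    show "range ((*v) (M - q *\<^sub>R mat 1)) \<subseteq> {x. M *v x = p *\<^sub>R x}"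
    proof clarify
      fix y
      have "(M - p *\<^sub>R mat 1) *v ((M - q *\<^sub>R mat 1) *v y) = 0"
        by (simp add: matrix_vector_mul_assoc Z)
      thus "M *v ((M - q *\<^sub>R mat 1) *v y) = p *\<^sub>R ((M - q *\<^sub>R mat 1) *v y)"
        by (simp only: mv_shift) simp
    qed
    show "{x. M *v x = p *\<^sub>R x} \<subseteq> range ((*v) (M - q *\<^sub>R mat 1))"
    proof clarify
      fix x assume x: "M *v x = p *\<^sub>R x"
      have "(M - q *\<^sub>R mat 1) *v ((1/(p-q)) *\<^sub>R x) = x"
      proof -
        have e: "p/(p-q) = 1 + q/(p-q)" using pq by (simp add: field_simps)
        show ?thesis using pq by (simp add: mv_shift matrix_vector_mult_scaleR x algebra_simps e)
      qed
      thus "x \<in> range ((*v) (M - q *\<^sub>R mat 1))" by (metis rangeI)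
    qed
  qed
  show "u_space M = range ((*v) (M - b *\<^sub>R mat 1))" using gen[OF Z1 ab] u by simp
  show "s_space M = range ((*v) (M - a *\<^sub>R mat 1))" using gen[OF Z2] ab u s by simp
qed

lemma ker_range:
  assumes "det R = 0" "tr2 R \<noteq> 0"
  shows "{x. R *v x = 0} = range ((*v) (R - tr2 R *\<^sub>R mat 1))"
proof
  have Z: "R ** (R - tr2 R *\<^sub>R mat 1) = 0"
    using assms(1) unfolding tr2_def det_2
    by (simp add: vec_eq_iff forall_2 matrix_matrix_mult_def sum_2 mat_def) algebra
  show "range ((*v) (R - tr2 R *\<^sub>R mat 1)) \<subseteq> {x. R *v x = 0}"
    by (auto simp: matrix_vector_mul_assoc Z)
  show "{x. R *v x = 0} \<subseteq> range ((*v) (R - tr2 R *\<^sub>R mat 1))"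
  proof clarify
    fix x assume x: "R *v x = 0"
    have "(R - tr2 R *\<^sub>R mat 1) *v ((-1/tr2 R) *\<^sub>R x) = x"
    proof -
      have "R *v ((-1/tr2 R) *\<^sub>R x) = 0" by (simp only: matrix_vector_mult_scaleR x) simp
      thus ?thesis using assms(2) by (simp only: mv_shift) simp
    qed
    thus "x \<in> range ((*v) (R - tr2 R *\<^sub>R mat 1))" by (metis rangeI)
  qed
qed



lemma step_formula:
  fixes M :: mat2
  assumes "tr2 M = a + b" "det M = a * b" "a \<noteq> b"
  shows "(x *\<^sub>R ((1/(a-b)) *\<^sub>R (M - b *\<^sub>R mat 1)) + y *\<^sub>R ((1/(b-a)) *\<^sub>R (M - a *\<^sub>R mat 1))) ** M
       = (x*a) *\<^sub>R ((1/(a-b)) *\<^sub>R (M - b *\<^sub>R mat 1)) + (y*b) *\<^sub>R ((1/(b-a)) *\<^sub>R (M - a *\<^sub>R mat 1))"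
proof -
  have ab: "a - b \<noteq> 0" "b - a \<noteq> 0" using assms(3) by auto
  show ?thesis
  using assms(1,2) ab unfolding tr2_def det_2
  apply (simp add: vec_eq_iff forall_2 matrix_matrix_mult_def sum_2 mat_def field_simps)
  apply algebra
  done
qed

primrec mpow :: "mat2 \<Rightarrow> nat \<Rightarrow> mat2" where
  "mpow M 0 = mat 1"
| "mpow M (Suc n) = mpow M n ** M"

lemma mpow_sg: "M \<in> semigroup_gen S \<Longrightarrow> mpow M (Suc n) \<in> semigroup_gen S"
proof (induction n)
  case 0 thus ?case by (simp add: matrix_mul_lid semigroup_gen.base)
next
  case (Suc n) thus ?case by (simp add: sg_mult)
qed

lemma proj_scrR:
  assumes M: "M \<in> semigroup_gen S" and ea: "is_real_eig M a" and eb: "is_real_eig M b"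
    and lt: "\<bar>a\<bar> > \<bar>b\<bar>"
  defines "P \<equiv> (1/(a-b)) *\<^sub>R (M - b *\<^sub>R mat 1)"
  shows "P \<in> scrR S" "range ((*v) P) = u_space M" "{x. P *v x = 0} = s_space M"
proof -
  have ab: "a \<noteq> b" using lt by auto
  have tr: "tr2 M = a + b" and dt: "det M = a * b" using eig_pair[OF ea eb ab] by auto
  define Q where "Q = (1/(b-a)) *\<^sub>R (M - a *\<^sub>R mat 1)"
  have pw: "mpow M n = a^n *\<^sub>R P + b^n *\<^sub>R Q" for n
  proof (induction n)
    case 0
    have ba: "1/(b-a) = - (1/(a-b))" by (simp add: divide_simps)
    have "P + Q = (1/(a-b)) *\<^sub>R ((a - b) *\<^sub>R mat 1)" unfolding P_def Q_def ba
      by (simp add: algebra_simps)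
    also have "\<dots> = mat 1" using ab by simp
    finally have "mat 1 = P + Q" by simp
    thus ?case by simp
  next
    case (Suc n)
    thus ?case using step_formula[OF tr dt ab, of "a^n" "b^n"] by (simp add: P_def Q_def mult.commute)
  qed
  have a0: "a \<noteq> 0" using lt by auto
  have lim: "(\<lambda>n. (1/a^(Suc n)) *\<^sub>R mpow M (Suc n)) \<longlonglongrightarrow> P"
  proof -
    have e: "(1/a^(Suc n)) *\<^sub>R mpow M (Suc n) = P + ((b/a)^(Suc n)) *\<^sub>R Q" for n
    proof -
      have "(1/a^(Suc n)) *\<^sub>R mpow M (Suc n) = (1/a^(Suc n)) *\<^sub>R (a^(Suc n) *\<^sub>R P + b^(Suc n) *\<^sub>R Q)"
        by (simp only: pw)
      also have "\<dots> = P + ((b/a)^(Suc n)) *\<^sub>R Q" using a0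
        by (simp add: scaleR_add_right power_divide del: power_Suc)
      finally show ?thesis .
    qed
    have "(\<lambda>n. (b/a)^(Suc n)) \<longlonglongrightarrow> 0"
      using lt a0 by (intro LIMSEQ_power_zero[THEN LIMSEQ_Suc]) (simp add: abs_divide)
    hence "(\<lambda>n. P + ((b/a)^(Suc n)) *\<^sub>R Q) \<longlonglongrightarrow> P + 0 *\<^sub>R Q"
      by (intro tendsto_intros)
    thus ?thesis unfolding e by simp
  qed
  have "(1/a^(Suc n)) *\<^sub>R mpow M (Suc n) \<in> TT S" for n
    using mpow_sg[OF M] unfolding TT_def by blast
  hence Pin: "P \<in> scrS S" unfolding scrS_TT closure_sequential using lim
    by (intro exI[of _ "\<lambda>n. (1/a^(Suc n)) *\<^sub>R mpow M (Suc n)"]) auto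
  obtain v where v: "v \<noteq> 0" "M *v v = a *\<^sub>R v" using ea by (auto simp: is_real_eig_def)
  have "P *v v = v" using ab unfolding P_def
    by (simp add: matrix_vector_mult_scaleR mv_shift v scaleR_diff_left[symmetric])
  hence P0: "P \<noteq> 0" using v by auto
  have "det (M - b *\<^sub>R mat 1) = 0" using eb eig_char det_shift by simp
  hence "det P = 0" unfolding P_def by (simp add: det_2)
  thus "P \<in> scrR S" using Pin P0 rank1_iff unfolding scrR_def by auto
  have spc: "u_space M = range ((*v) (M - b *\<^sub>R mat 1))" "s_space M = {x. M *v x = b *\<^sub>R x}"
    using spec[OF ea eb lt] by auto
  show "range ((*v) P) = u_space M" unfolding P_def spc
    using ab range_scale[of "1/(a-b)" "M - b *\<^sub>R mat 1"] by simp
  show "{x. P *v x = 0} = s_space M" unfolding P_def spc using ab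
    by (auto simp: matrix_vector_mult_scaleR mv_shift)
qed



lemma det_cont: "continuous_on UNIV (\<lambda>R::mat2. det R)"
  unfolding det_2 by (intro continuous_intros)

lemma closed_det0: "closed {R::mat2. det R = 0}"
  by (rule closed_Collect_eq[OF det_cont continuous_on_const])

lemma scrR_props:
  assumes am: "almost_multiplicative (semigroup_gen S)" and R: "R \<in> scrR S"
  shows "R \<in> scrS S" "R \<noteq> 0" "det R = 0" "tr2 R \<noteq> 0"
proof -
  show R1: "R \<in> scrS S" "R \<noteq> 0" "det R = 0" using R rank1_iff by (auto simp: scrR_def)
  have "R ** R \<noteq> 0" by (rule sq_nonzero[OF am R1(1,2)])
  moreover have "R ** R = tr2 R *\<^sub>R R" using CH[of R] R1(3) by simp
  ultimately show "tr2 R \<noteq> 0" by auto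
qed

definition KK :: "mat2 set \<Rightarrow> mat2 set" where
  "KK S = scrS S \<inter> sphere 0 1 \<inter> {R. det R = 0}"

lemma compact_KK: "compact (KK S)"
proof -
  have "compact (sphere (0::mat2) 1 \<inter> (scrS S \<inter> {R. det R = 0}))"
    by (intro compact_Int_closed compact_sphere closed_Int closed_scrS closed_det0)
  thus ?thesis unfolding KK_def by (simp add: Int_ac)
qed

lemma KK_scrR: "R \<in> KK S \<Longrightarrow> R \<in> scrR S"
proof -
  assume "R \<in> KK S"
  hence R: "R \<in> scrS S" "norm R = 1" "det R = 0" by (auto simp: KK_def)
  hence "R \<noteq> 0" by auto
  hence "rank R = 1" using R(3) rank1_iff by blast
  thus ?thesis using R(1) by (simp add: scrR_def)
qed

lemma scrR_KK:
  assumes "R \<in> scrR S"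
  shows "(1/norm R) *\<^sub>R R \<in> KK S"
proof -
  have R: "R \<in> scrS S" "R \<noteq> 0" "det R = 0" using assms rank1_iff by (auto simp: scrR_def)
  have d: "det ((1/norm R) *\<^sub>R R) = (1/norm R)^2 * det R"
    unfolding det_2 by (simp add: power2_eq_square algebra_simps)
  have n: "norm ((1/norm R) *\<^sub>R R) = 1" using R(2) by simp
  show ?thesis unfolding KK_def using scrS_scale[OF R(1)] d n R(3) by simp
qed

definition fu :: "mat2 \<Rightarrow> mat2" where "fu R = line_proj (range ((*v) R))"
definition fs :: "mat2 \<Rightarrow> mat2" where "fs R = line_proj (range ((*v) (R - tr2 R *\<^sub>R mat 1)))"

lemma ev_within_KK: "eventually (\<lambda>x. det x = 0) (at R within KK S)"
  by (simp add: eventually_at_filter KK_def)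

lemma cont_fu: "continuous_on (KK S) fu"
  unfolding continuous_on_def
proof
  fix R assume R: "R \<in> KK S"
  hence R1: "R \<noteq> 0" "det R = 0" by (auto simp: KK_def)
  show "(fu \<longlongrightarrow> fu R) (at R within KK S)" unfolding fu_def
    by (rule lp_range_tendsto[where Q="\<lambda>x. x", OF tendsto_ident_at R1 ev_within_KK])
qed

lemma shift_nz:
  assumes "R \<noteq> 0" "det R = 0"
  shows "R - tr2 R *\<^sub>R mat 1 \<noteq> 0" "det (R - tr2 R *\<^sub>R mat 1) = 0"
proof -
  show "det (R - tr2 R *\<^sub>R mat 1) = 0" using assms(2) det_shift[of R "tr2 R"] by (simp add: power2_eq_square)
  show "R - tr2 R *\<^sub>R mat 1 \<noteq> 0"
  proof
    assume "R - tr2 R *\<^sub>R mat 1 = 0"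
    hence e: "R = tr2 R *\<^sub>R mat 1" by simp
    have "tr2 R = tr2 (tr2 R *\<^sub>R mat 1)" using e by (rule arg_cong)
    also have "\<dots> = 2 * tr2 R" by (simp add: tr2_def mat_def)
    finally have "tr2 R = 0" by simp
    thus False using e assms(1) by simp
  qed
qed



lemma det_shift_tr: "det (R - tr2 R *\<^sub>R mat 1) = det R"
  using det_shift[of R "tr2 R"] by (simp add: power2_eq_square)

lemma tr2_tendsto: "(f \<longlongrightarrow> R) F \<Longrightarrow> ((\<lambda>x. tr2 (f x)) \<longlongrightarrow> tr2 R) F"
  unfolding tr2_def by (intro tendsto_add tendsto_vec_nth)

lemma det_tendsto: "(f \<longlongrightarrow> (R::mat2)) F \<Longrightarrow> ((\<lambda>x. det (f x)) \<longlongrightarrow> det R) F"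
  unfolding det_2 by (intro tendsto_diff tendsto_mult tendsto_vec_nth)

lemma cont_fs: "continuous_on (KK S) fs"
  unfolding continuous_on_def
proof
  fix R assume R: "R \<in> KK S"
  hence R1: "R \<noteq> 0" "det R = 0" by (auto simp: KK_def)
  have t: "((\<lambda>x. x - tr2 x *\<^sub>R mat 1) \<longlongrightarrow> R - tr2 R *\<^sub>R mat 1) (at R within KK S)"
    by (intro tendsto_diff tendsto_scaleR tr2_tendsto tendsto_ident_at tendsto_const)
  have ev: "eventually (\<lambda>x. det (x - tr2 x *\<^sub>R mat 1) = 0) (at R within KK S)"
    using ev_within_KK by (rule eventually_mono) (simp add: det_shift_tr)
  show "(fs \<longlongrightarrow> fs R) (at R within KK S)" unfolding fs_def
    by (rule lp_range_tendsto[OF t shift_nz[OF R1] ev])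
qed

lemma line_eq:
  assumes "is_line L1" "is_line L2" "line_proj L1 = line_proj L2"
  shows "L1 = L2"
proof -
  obtain v where v: "v \<noteq> 0" "L1 = span {v}" using line_rep assms(1) by blast
  obtain w where w: "w \<noteq> 0" "L2 = span {w}" using line_rep assms(2) by blast
  have "line_proj L1 = pl v" using line_proj_span[OF v(1)] v(2) by simp
  moreover have "line_proj L2 = pl w" using line_proj_span[OF w(1)] w(2) by simp
  ultimately have "pl v = pl w" using assms(3) by simp
  from pl_inj[OF v(1) w(1) this] show ?thesis using v(2) w(2) by simp
qed

lemma ker_fs:
  assumes am: "almost_multiplicative (semigroup_gen S)" and R: "R \<in> scrR S"
  shows "{x. R *v x = 0} = range ((*v) (R - tr2 R *\<^sub>R mat 1))"
    "is_line {x. R *v x = 0}" "line_proj {x. R *v x = 0} = fs R"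
proof -
  note P = scrR_props[OF am R]
  show e: "{x. R *v x = 0} = range ((*v) (R - tr2 R *\<^sub>R mat 1))" by (rule ker_range[OF P(3,4)])
  show "is_line {x. R *v x = 0}" unfolding e by (rule rank1_range_props[OF shift_nz[OF P(2,3)]])
  show "line_proj {x. R *v x = 0} = fs R" unfolding e fs_def ..
qed

lemma proximal_split:
  assumes "proximal M"
  obtains a b where "is_real_eig M a" "is_real_eig M b" "\<bar>a\<bar> > \<bar>b\<bar>"
proof -
  obtain l1 l2 where l: "is_real_eig M l1" "is_real_eig M l2" "\<bar>l1\<bar> \<noteq> \<bar>l2\<bar>"
    using assms unfolding proximal_def by blast
  show ?thesis
  proof (cases "\<bar>l1\<bar> > \<bar>l2\<bar>")
    case True thus ?thesis using that l by blast
  next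
    case False hence "\<bar>l2\<bar> > \<bar>l1\<bar>" using l(3) by linarith
    thus ?thesis using that l by blast
  qed
qed

lemma u_in_Y:
  assumes am: "almost_multiplicative (semigroup_gen S)"
    and M: "M \<in> semigroup_gen S" "proximal M"
  shows "line_proj (u_space M) \<in> fu ` KK S" "line_proj (s_space M) \<in> fs ` KK S"
proof -
  obtain a b where ab: "is_real_eig M a" "is_real_eig M b" "\<bar>a\<bar> > \<bar>b\<bar>"
    using proximal_split[OF M(2)] by blast
  define P where "P = (1/(a-b)) *\<^sub>R (M - b *\<^sub>R mat 1)"
  have P: "P \<in> scrR S" "range ((*v) P) = u_space M" "{x. P *v x = 0} = s_space M"
    using proj_scrR[OF M(1) ab] unfolding P_def by auto
  note PP = scrR_props[OF am P(1)]
  define P' where "P' = (1/norm P) *\<^sub>R P"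
  have P'K: "P' \<in> KK S" unfolding P'_def by (rule scrR_KK[OF P(1)])
  have nz: "1/norm P \<noteq> 0" using PP(2) by simp
  have "fu P' = line_proj (u_space M)"
    unfolding fu_def P'_def range_scale[OF nz] P(2) ..
  thus "line_proj (u_space M) \<in> fu ` KK S" using P'K by force
  have "{x. P' *v x = 0} = {x. P *v x = 0}" using nz by (auto simp: P'_def)
  hence "line_proj (s_space M) = line_proj {x. P' *v x = 0}" using P(3) by simp
  also have "\<dots> = fs P'" by (rule ker_fs(3)[OF am KK_scrR[OF P'K]])
  finally show "line_proj (s_space M) \<in> fs ` KK S" using P'K by force
qed



lemma eig_scale:
  assumes "is_real_eig (c *\<^sub>R M) l" "c \<noteq> 0"
  shows "is_real_eig M (l/c)"
proof -
  obtain v where v: "v \<noteq> 0" "(c *\<^sub>R M) *v v = l *\<^sub>R v" using assms(1) by (auto simp: is_real_eig_def)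
  hence "c *\<^sub>R (M *v v) = l *\<^sub>R v" by simp
  hence "(1/c) *\<^sub>R (c *\<^sub>R (M *v v)) = (1/c) *\<^sub>R (l *\<^sub>R v)" by simp
  hence "M *v v = (l/c) *\<^sub>R v" using assms(2) by simp
  thus ?thesis using v(1) by (auto simp: is_real_eig_def)
qed

lemma good:
  assumes N: "N \<in> TT S" "N \<noteq> 0" and e: "is_real_eig N l1" "is_real_eig N l2" "\<bar>l1\<bar> > \<bar>l2\<bar>"
  shows "range ((*v) (N - l2 *\<^sub>R mat 1)) \<in> {u_space M | M. M \<in> semigroup_gen S \<and> proximal M}"
    "range ((*v) (N - l1 *\<^sub>R mat 1)) \<in> {s_space M | M. M \<in> semigroup_gen S \<and> proximal M}"
proof -
  obtain c M where cM: "N = c *\<^sub>R M" "M \<in> semigroup_gen S" using N(1) by (auto simp: TT_def)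
  have c: "c \<noteq> 0" using N(2) cM by auto
  have ea: "is_real_eig M (l1/c)" and eb: "is_real_eig M (l2/c)" using eig_scale e cM c by auto
  have lt: "\<bar>l1/c\<bar> > \<bar>l2/c\<bar>" using e(3) c by (simp add: abs_divide divide_strict_right_mono)
  note sp = spec[OF ea eb lt]
  have sc: "N - l *\<^sub>R mat 1 = c *\<^sub>R (M - (l/c) *\<^sub>R mat 1)" for l
    using c by (simp add: cM algebra_simps)
  have "u_space M = range ((*v) (N - l2 *\<^sub>R mat 1))" unfolding sc range_scale[OF c] sp(4) ..
  thus "range ((*v) (N - l2 *\<^sub>R mat 1)) \<in> {u_space M | M. M \<in> semigroup_gen S \<and> proximal M}"
    using cM(2) sp(1) by blast
  have "s_space M = range ((*v) (N - l1 *\<^sub>R mat 1))" unfolding sc range_scale[OF c] sp(5) ..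
  thus "range ((*v) (N - l1 *\<^sub>R mat 1)) \<in> {s_space M | M. M \<in> semigroup_gen S \<and> proximal M}"
    using cM(2) sp(1) by blast
qed

lemma roots:
  fixes T D \<sigma> :: real
  assumes s: "\<sigma> * \<sigma> = 1" and d: "T^2 - 4*D > 0" and st: "\<sigma> * T > 0"
  defines "l1 \<equiv> (T + \<sigma> * sqrt (T^2 - 4*D)) / 2"
  shows "l1^2 - T * l1 + D = 0" "(T - l1)^2 - T * (T - l1) + D = 0" "\<bar>l1\<bar> > \<bar>T - l1\<bar>"
proof -
  define q where "q = sqrt (T^2 - 4*D)"
  have q2: "q * q = T^2 - 4*D" using d unfolding q_def by (simp add: real_sqrt_mult[symmetric])
  have qp: "q > 0" using d unfolding q_def by simp
  have l1: "l1 = (T + \<sigma> * q)/2" unfolding l1_def q_def ..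
  have "l1^2 - T * l1 + D = ((\<sigma>*\<sigma>)*(q*q) - T^2 + 4*D)/4"
    unfolding l1 by (simp add: power2_eq_square field_simps)
  thus "l1^2 - T * l1 + D = 0" using q2 s by simp
  have "(T - l1)^2 - T * (T - l1) + D = ((\<sigma>*\<sigma>)*(q*q) - T^2 + 4*D)/4"
    unfolding l1 by (simp add: power2_eq_square field_simps)
  thus "(T - l1)^2 - T * (T - l1) + D = 0" using q2 s by simp
  have "l1 * l1 - (T - l1) * (T - l1) = \<sigma> * T * q"
    unfolding l1 by (simp add: field_simps)
  moreover have "\<sigma> * T * q > 0" using st qp by simp
  ultimately have "l1 * l1 > (T - l1) * (T - l1)" by simp
  thus "\<bar>l1\<bar> > \<bar>T - l1\<bar>" by (metis abs_mult_self_eq abs_ge_zero mult_mono not_less)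
qed



lemma sub_both:
  assumes am: "almost_multiplicative (semigroup_gen S)" and R: "R \<in> scrR S"
  shows "line_proj (range ((*v) R)) \<in> closure (line_proj ` {u_space M | M. M \<in> semigroup_gen S \<and> proximal M})"
    "line_proj {x. R *v x = 0} \<in> closure (line_proj ` {s_space M | M. M \<in> semigroup_gen S \<and> proximal M})"
proof -
  note P = scrR_props[OF am R]
  obtain f where f: "\<And>n. f n \<in> TT S" "f \<longlonglongrightarrow> R"
    using P(1) unfolding scrS_TT closure_sequential by blast
  define t where "t = tr2 R"
  define \<sigma> where "\<sigma> = sgn t"
  have t0: "t \<noteq> 0" using P(4) t_def by simp
  have s2: "\<sigma> * \<sigma> = 1" using t0 unfolding \<sigma>_def by (simp add: sgn_if)
  have st: "\<sigma> * t > 0" using t0 unfolding \<sigma>_def by (simp add: sgn_if)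
  define T where "T n = tr2 (f n)" for n
  define D where "D n = det (f n)" for n
  define l1 where "l1 n = (T n + \<sigma> * sqrt ((T n)^2 - 4 * D n)) / 2" for n
  define l2 where "l2 n = T n - l1 n" for n
  have Tl: "T \<longlonglongrightarrow> t" unfolding T_def t_def by (rule tr2_tendsto[OF f(2)])
  have Dl: "D \<longlonglongrightarrow> 0" unfolding D_def using det_tendsto[OF f(2)] P(3) by simp
  have discl: "(\<lambda>n. (T n)^2 - 4 * D n) \<longlonglongrightarrow> t^2 - 4 * 0"
    by (intro tendsto_diff tendsto_power tendsto_mult tendsto_const Tl Dl)
  have sql: "(\<lambda>n. sqrt ((T n)^2 - 4 * D n)) \<longlonglongrightarrow> \<bar>t\<bar>"
    using tendsto_real_sqrt[OF discl] by simp
  have l1l: "l1 \<longlonglongrightarrow> (t + \<sigma> * \<bar>t\<bar>) / 2" unfolding l1_def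
    by (intro tendsto_divide tendsto_add tendsto_mult tendsto_const Tl sql) simp
  have "(t + \<sigma> * \<bar>t\<bar>) / 2 = t" using t0 unfolding \<sigma>_def by (simp add: sgn_if)
  hence l1l': "l1 \<longlonglongrightarrow> t" using l1l by simp
  have l2l: "l2 \<longlonglongrightarrow> 0" unfolding l2_def using tendsto_diff[OF Tl l1l'] by simp
  have ev1: "eventually (\<lambda>n. (T n)^2 - 4 * D n > 0) sequentially"
  proof -
    have tp: "0 < t^2 - 4 * (0::real)" using t0 by simp
    show ?thesis by (rule order_tendstoD(1)[OF discl tp])
  qed
  have ev2: "eventually (\<lambda>n. \<sigma> * T n > 0) sequentially"
    using order_tendstoD(1)[OF tendsto_mult[OF tendsto_const Tl, of \<sigma>] st] by simp
  have ev3: "eventually (\<lambda>n. f n \<noteq> 0) sequentially"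
    by (rule tendsto_imp_eventually_ne[OF f(2) P(2)])
  have evg: "eventually (\<lambda>n. f n \<noteq> 0 \<and> is_real_eig (f n) (l1 n) \<and> is_real_eig (f n) (l2 n)
      \<and> \<bar>l1 n\<bar> > \<bar>l2 n\<bar>) sequentially"
    using ev1 ev2 ev3
  proof eventually_elim
    case (elim n)
    note r = roots[OF s2 elim(1) elim(2)]
    have "is_real_eig (f n) (l1 n)" unfolding eig_char using r(1) by (simp add: l1_def T_def D_def)
    moreover have "is_real_eig (f n) (l2 n)" unfolding eig_char using r(2) by (simp add: l1_def l2_def T_def D_def)
    moreover have "\<bar>l1 n\<bar> > \<bar>l2 n\<bar>" using r(3) by (simp add: l1_def l2_def)
    ultimately show ?case using elim(3) by simp
  qed
  \<comment> \<open>u part\<close>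
  have Q2: "(\<lambda>n. f n - l2 n *\<^sub>R mat 1) \<longlonglongrightarrow> R - 0 *\<^sub>R mat 1"
    by (intro tendsto_diff tendsto_scaleR f(2) l2l tendsto_const)
  have evd2: "eventually (\<lambda>n. det (f n - l2 n *\<^sub>R mat 1) = 0) sequentially"
    using evg by (rule eventually_mono) (simp add: det_shift eig_char)
  have lim_u: "(\<lambda>n. line_proj (range ((*v) (f n - l2 n *\<^sub>R mat 1)))) \<longlonglongrightarrow> line_proj (range ((*v) R))"
  proof -
    have "R - 0 *\<^sub>R mat 1 \<noteq> 0" "det (R - 0 *\<^sub>R mat 1) = 0" using P(2,3) by simp_all
    from lp_range_tendsto[OF Q2 this evd2] show ?thesis by simp
  qed
  have evu: "eventually (\<lambda>n. line_proj (range ((*v) (f n - l2 n *\<^sub>R mat 1)))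
       \<in> closure (line_proj ` {u_space M | M. M \<in> semigroup_gen S \<and> proximal M})) sequentially"
    using evg
  proof (rule eventually_mono)
    fix n assume H: "f n \<noteq> 0 \<and> is_real_eig (f n) (l1 n) \<and> is_real_eig (f n) (l2 n) \<and> \<bar>l1 n\<bar> > \<bar>l2 n\<bar>"
    have "range ((*v) (f n - l2 n *\<^sub>R mat 1)) \<in> {u_space M | M. M \<in> semigroup_gen S \<and> proximal M}"
    proof -
      from H have h: "f n \<noteq> 0" "is_real_eig (f n) (l1 n)" "is_real_eig (f n) (l2 n)" "\<bar>l1 n\<bar> > \<bar>l2 n\<bar>"
        by simp_all
      show ?thesis by (rule good(1)[OF f(1) h])
    qed
    hence "line_proj (range ((*v) (f n - l2 n *\<^sub>R mat 1))) \<in> line_proj ` {u_space M | M. M \<in> semigroup_gen S \<and> proximal M}"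
      by (rule imageI)
    thus "line_proj (range ((*v) (f n - l2 n *\<^sub>R mat 1))) \<in> closure (line_proj ` {u_space M | M. M \<in> semigroup_gen S \<and> proximal M})"
      by (rule closure_subset[THEN subsetD])
  qed
  show "line_proj (range ((*v) R)) \<in> closure (line_proj ` {u_space M | M. M \<in> semigroup_gen S \<and> proximal M})"
    by (rule Lim_in_closed_set[OF closed_closure evu _ lim_u]) simp
  \<comment> \<open>s part\<close>
  have Q1: "(\<lambda>n. f n - l1 n *\<^sub>R mat 1) \<longlonglongrightarrow> R - tr2 R *\<^sub>R mat 1"
    unfolding t_def[symmetric] by (intro tendsto_diff tendsto_scaleR f(2) l1l' tendsto_const)
  have evd1: "eventually (\<lambda>n. det (f n - l1 n *\<^sub>R mat 1) = 0) sequentially"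
    using evg by (rule eventually_mono) (simp add: det_shift eig_char)
  have lim_s: "(\<lambda>n. line_proj (range ((*v) (f n - l1 n *\<^sub>R mat 1)))) \<longlonglongrightarrow> line_proj {x. R *v x = 0}"
    using lp_range_tendsto[OF Q1 shift_nz[OF P(2,3)] evd1] ker_fs(1)[OF am R] by simp
  have evs: "eventually (\<lambda>n. line_proj (range ((*v) (f n - l1 n *\<^sub>R mat 1)))
       \<in> closure (line_proj ` {s_space M | M. M \<in> semigroup_gen S \<and> proximal M})) sequentially"
    using evg
  proof (rule eventually_mono)
    fix n assume H: "f n \<noteq> 0 \<and> is_real_eig (f n) (l1 n) \<and> is_real_eig (f n) (l2 n) \<and> \<bar>l1 n\<bar> > \<bar>l2 n\<bar>"
    have "range ((*v) (f n - l1 n *\<^sub>R mat 1)) \<in> {s_space M | M. M \<in> semigroup_gen S \<and> proximal M}"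
    proof -
      from H have h: "f n \<noteq> 0" "is_real_eig (f n) (l1 n)" "is_real_eig (f n) (l2 n)" "\<bar>l1 n\<bar> > \<bar>l2 n\<bar>"
        by simp_all
      show ?thesis by (rule good(2)[OF f(1) h])
    qed
    hence "line_proj (range ((*v) (f n - l1 n *\<^sub>R mat 1))) \<in> line_proj ` {s_space M | M. M \<in> semigroup_gen S \<and> proximal M}"
      by (rule imageI)
    thus "line_proj (range ((*v) (f n - l1 n *\<^sub>R mat 1))) \<in> closure (line_proj ` {s_space M | M. M \<in> semigroup_gen S \<and> proximal M})"
      by (rule closure_subset[THEN subsetD])
  qed
  show "line_proj {x. R *v x = 0} \<in> closure (line_proj ` {s_space M | M. M \<in> semigroup_gen S \<and> proximal M})"
    by (rule Lim_in_closed_set[OF closed_closure evs _ lim_s]) simp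
qed



theorem lemma3p4:
  fixes A :: "mat2 set"
  assumes "\<forall>M\<in>A. invertible M"
    and "scrR A \<noteq> {}"
    and "almost_multiplicative (semigroup_gen A)"
  shows "{range (\<lambda>x. M *v x) | M. M \<in> scrR A}
           = rp1_closure {u_space M | M. M \<in> semigroup_gen A \<and> proximal M}
       \<and> {{x. M *v x = 0} | M. M \<in> scrR A}
           = rp1_closure {s_space M | M. M \<in> semigroup_gen A \<and> proximal M}"
proof -
  note am = assms(3)
  define U where "U = {u_space M | M. M \<in> semigroup_gen A \<and> proximal M}"
  define Us where "Us = {s_space M | M. M \<in> semigroup_gen A \<and> proximal M}"
  have clu: "closed (fu ` KK A)"
    by (rule compact_imp_closed[OF compact_continuous_image[OF cont_fu compact_KK]])
  have cls: "closed (fs ` KK A)"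
    by (rule compact_imp_closed[OF compact_continuous_image[OF cont_fs compact_KK]])
  have Uin: "line_proj ` U \<subseteq> fu ` KK A" unfolding U_def using u_in_Y(1)[OF am] by blast
  have Usin: "line_proj ` Us \<subseteq> fs ` KK A" unfolding Us_def using u_in_Y(2)[OF am] by blast
  have part1: "{range (\<lambda>x. M *v x) | M. M \<in> scrR A} = rp1_closure U"
  proof
    show "{range (\<lambda>x. M *v x) | M. M \<in> scrR A} \<subseteq> rp1_closure U"
    proof clarify
      fix R assume R: "R \<in> scrR A"
      note P = scrR_props[OF am R]
      have "is_line (range ((*v) R))" by (rule rank1_range_props[OF P(2,3)])
      moreover have "line_proj (range ((*v) R)) \<in> closure (line_proj ` U)"
        unfolding U_def by (rule sub_both(1)[OF am R])
      ultimately show "range ((*v) R) \<in> rp1_closure U" by (simp add: rp1_closure_def)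
    qed
    show "rp1_closure U \<subseteq> {range (\<lambda>x. M *v x) | M. M \<in> scrR A}"
    proof
      fix L assume L: "L \<in> rp1_closure U"
      hence Ll: "is_line L" and Lc: "line_proj L \<in> closure (line_proj ` U)" by (auto simp: rp1_closure_def)
      have "closure (line_proj ` U) \<subseteq> fu ` KK A" by (rule closure_minimal[OF Uin clu])
      then obtain R where R: "R \<in> KK A" "line_proj L = fu R" using Lc by blast
      have RR: "R \<in> scrR A" by (rule KK_scrR[OF R(1)])
      note P = scrR_props[OF am RR]
      have "L = range ((*v) R)"
        by (rule line_eq[OF Ll rank1_range_props[OF P(2,3)]]) (use R(2) in \<open>simp add: fu_def\<close>)
      thus "L \<in> {range (\<lambda>x. M *v x) | M. M \<in> scrR A}" using RR by blast
    qed
  qed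
  have part2: "{{x. M *v x = 0} | M. M \<in> scrR A} = rp1_closure Us"
  proof
    show "{{x. M *v x = 0} | M. M \<in> scrR A} \<subseteq> rp1_closure Us"
    proof clarify
      fix R assume R: "R \<in> scrR A"
      have "is_line {x. R *v x = 0}" by (rule ker_fs(2)[OF am R])
      moreover have "line_proj {x. R *v x = 0} \<in> closure (line_proj ` Us)"
        unfolding Us_def by (rule sub_both(2)[OF am R])
      ultimately show "{x. R *v x = 0} \<in> rp1_closure Us" by (simp add: rp1_closure_def)
    qed
    show "rp1_closure Us \<subseteq> {{x. M *v x = 0} | M. M \<in> scrR A}"
    proof
      fix L assume L: "L \<in> rp1_closure Us"
      hence Ll: "is_line L" and Lc: "line_proj L \<in> closure (line_proj ` Us)" by (auto simp: rp1_closure_def)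
      have "closure (line_proj ` Us) \<subseteq> fs ` KK A" by (rule closure_minimal[OF Usin cls])
      then obtain R where R: "R \<in> KK A" "line_proj L = fs R" using Lc by blast
      have RR: "R \<in> scrR A" by (rule KK_scrR[OF R(1)])
      have "L = {x. R *v x = 0}"
        by (rule line_eq[OF Ll ker_fs(2)[OF am RR]]) (use R(2) ker_fs(3)[OF am RR] in simp)
      thus "L \<in> {{x. M *v x = 0} | M. M \<in> scrR A}" using RR by blast
    qed
  qed
  show ?thesis using part1 part2 unfolding U_def Us_def by simp
qed

end
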